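(* Let $T$ be a map on $[0,1]$ and $\nu$ a $T$-invariant exponentially mixing probability measure. Let $s\ge0$. Then for $\nu$-a.e. $x$, $\{y:\overline R(x,y)\ge s\}\subset\{y:\overline d_\nu(y)\ge s\}$.
   Context: A $T$-invariant measure $\nu$ on $[0,1]$ is exponentially mixing if there exist $C>0$ and $0<\beta<1$ such that for every ball $A$, every Borel set $B$ and every $n\ge1$, $|\nu(A\cap T^{-n}B)-\nu(A)\nu(B)|\le C\beta^n\nu(B)$. $B(y,r)$ is the open ball. $\tau_r(x,y)=\inf\{n\ge1:T^nx\in B(y,r)\}$ and $\overline R(x,y)=\limsup_{r\to0}\frac{\log\tau_r(x,y)}{-\log r}$, with $\tau_r(x,y)=\infty$ and $\overline R(x,y)=\infty$ when the forward orbit $\{T^nx:n\ge1\}$ misses $B(y,r)$. $\overline d_\nu(y)=\limsup_{r\to0}\frac{\log\nu(B(y,r))}{\log r}$. *)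

theory Defs
  imports "HOL-Analysis.Analysis" "HOL-Probability.Probability"
begin

definition hit_time :: "(real \<Rightarrow> real) \<Rightarrow> real \<Rightarrow> real \<Rightarrow> real \<Rightarrow> ereal" where
  "hit_time T r x y =
     (if \<exists>n::nat. n \<ge> 1 \<and> (T ^^ n) x \<in> ball y r
      then ereal (real (LEAST n::nat. n \<ge> 1 \<and> (T ^^ n) x \<in> ball y r))
      else \<infinity>)"

definition upper_hit_exp :: "(real \<Rightarrow> real) \<Rightarrow> real \<Rightarrow> real \<Rightarrow> ereal" where
  "upper_hit_exp T x y =
     Limsup (at_right 0)
       (\<lambda>r. if hit_time T r x y = \<infinity> then \<infinity>
             else ereal (ln (real_of_ereal (hit_time T r x y)) / (- ln r)))"

text \<open>Upper local dimension: limsup as r \<rightarrow> 0 of log nu(B(y,r)) / log r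
  (with log 0 = -\<infinity>, so the quotient is +\<infinity> when the ball is null).\<close>
definition upper_local_dim :: "real measure \<Rightarrow> real \<Rightarrow> ereal" where
  "upper_local_dim \<nu> y =
     Limsup (at_right 0)
       (\<lambda>r. if measure \<nu> (ball y r \<inter> space \<nu>) = 0 then \<infinity>
             else ereal (ln (measure \<nu> (ball y r \<inter> space \<nu>)) / ln r))"

definition invariant_measure :: "(real \<Rightarrow> real) \<Rightarrow> real measure \<Rightarrow> bool" where
  "invariant_measure T \<nu> \<longleftrightarrow> T \<in> measurable \<nu> \<nu> \<and>
     (\<forall>B\<in>sets \<nu>. measure \<nu> (T -` B \<inter> space \<nu>) = measure \<nu> B)"

definition exp_mixing :: "(real \<Rightarrow> real) \<Rightarrow> real measure \<Rightarrow> bool" where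
  "exp_mixing T \<nu> \<longleftrightarrow>
     (\<exists>C::real. \<exists>\<beta>::real. C > 0 \<and> 0 < \<beta> \<and> \<beta> < 1 \<and>
       (\<forall>y\<in>space \<nu>. \<forall>r>0. \<forall>B\<in>sets \<nu>. \<forall>n::nat. n \<ge> 1 \<longrightarrow>
          \<bar>measure \<nu> (ball y r \<inter> (T ^^ n) -` B \<inter> space \<nu>)
            - measure \<nu> (ball y r \<inter> space \<nu>) * measure \<nu> B\<bar>
          \<le> C * \<beta> ^ n * measure \<nu> B))"

end

theory Submission
  imports Defs "HOL-Real_Asymp.Real_Asymp"
begin

lemma inv_iter:
  assumes Tm: "T \<in> measurable \<nu> \<nu>"
    and inv: "\<forall>B\<in>sets \<nu>. measure \<nu> (T -` B \<inter> space \<nu>) = measure \<nu> B"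
    and B: "B \<in> sets \<nu>"
  shows "measure \<nu> ((T^^n) -` B \<inter> space \<nu>) = measure \<nu> B"
proof (induction n)
  case 0
  then show ?case using sets.sets_into_space[OF B] by (simp add: Int_absorb2)
next
  case (Suc n)
  have "(T^^Suc n) -` B \<inter> space \<nu> = T -` ((T^^n) -` B \<inter> space \<nu>) \<inter> space \<nu>"
    using measurable_space[OF Tm] by (auto simp: funpow_Suc_right simp del: funpow.simps)
  moreover have "(T^^n) -` B \<inter> space \<nu> \<in> sets \<nu>"
    using measurable_compose_n[OF Tm] B by (simp add: measurable_sets)
  ultimately show ?case using inv Suc
    by (metis (no_types, lifting))
qed

lemma miss_bound_f:
  assumes P: "prob_space \<nu>" and fm: "f \<in> measurable \<nu> \<nu>"
    and finv: "\<forall>B\<in>sets \<nu>. measure \<nu> (f -` B \<inter> space \<nu>) = measure \<nu> B"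
    and Am: "ball z \<rho> \<inter> space \<nu> \<in> sets \<nu>"
    and mix: "\<forall>B\<in>sets \<nu>. \<bar>measure \<nu> (ball z \<rho> \<inter> f -` B \<inter> space \<nu>)
            - measure \<nu> (ball z \<rho> \<inter> space \<nu>) * measure \<nu> B\<bar> \<le> c * measure \<nu> B"
    and c: "c \<le> measure \<nu> (ball z \<rho> \<inter> space \<nu>) / 2"
  shows "\<exists>S\<in>sets \<nu>. measure \<nu> S \<le> (1 - measure \<nu> (ball z \<rho> \<inter> space \<nu>) / 2) ^ m \<and>
     (\<forall>x\<in>space \<nu>. (\<forall>i<m. (f^^(Suc i)) x \<notin> ball z \<rho>) \<longrightarrow> x \<in> S)"
proof -
  interpret prob_space \<nu> by (rule P)
  define a where "a = measure \<nu> (ball z \<rho> \<inter> space \<nu>)"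
  define H where "H = rec_nat (space \<nu>) (\<lambda>_ X. (space \<nu> - ball z \<rho>) \<inter> f -` X \<inter> space \<nu>)"
  have H0: "H 0 = space \<nu>" by (simp add: H_def)
  have HS: "H (Suc m) = (space \<nu> - ball z \<rho>) \<inter> f -` H m \<inter> space \<nu>" for m by (simp add: H_def)
  have Hs: "H m \<in> sets \<nu>" for m
  proof (induction m)
    case 0 then show ?case by (simp add: H0)
  next
    case (Suc m)
    have "f -` H m \<inter> space \<nu> \<in> sets \<nu>" using fm Suc by (simp add: measurable_sets)
    then have "(f -` H m \<inter> space \<nu>) - (ball z \<rho> \<inter> space \<nu>) \<in> sets \<nu>" using Am by auto
    moreover have "(f -` H m \<inter> space \<nu>) - (ball z \<rho> \<inter> space \<nu>) = H (Suc m)" by (auto simp: HS)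
    ultimately show ?case by simp
  qed
  have step: "measure \<nu> (H (Suc m)) \<le> (1 - a/2) * measure \<nu> (H m)" for m
  proof -
    have e: "H (Suc m) = (f -` H m \<inter> space \<nu>) - (ball z \<rho> \<inter> f -` H m \<inter> space \<nu>)"
      by (auto simp: HS)
    have m1: "f -` H m \<inter> space \<nu> \<in> sets \<nu>" using fm Hs by (simp add: measurable_sets)
    have m2: "ball z \<rho> \<inter> f -` H m \<inter> space \<nu> \<in> sets \<nu>"
    proof -
      have "ball z \<rho> \<inter> f -` H m \<inter> space \<nu> = (ball z \<rho> \<inter> space \<nu>) \<inter> (f -` H m \<inter> space \<nu>)" by auto
      then show ?thesis using m1 Am by auto
    qed
    have "measure \<nu> (H (Suc m)) = measure \<nu> (f -` H m \<inter> space \<nu>) - measure \<nu> (ball z \<rho> \<inter> f -` H m \<inter> space \<nu>)"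
      unfolding e by (rule finite_measure_Diff[OF m1 m2]) auto
    also have "\<dots> = measure \<nu> (H m) - measure \<nu> (ball z \<rho> \<inter> f -` H m \<inter> space \<nu>)"
      using finv Hs by simp
    also have "\<dots> \<le> measure \<nu> (H m) - (a - c) * measure \<nu> (H m)"
      using mix Hs[of m] unfolding a_def by (auto simp: algebra_simps abs_le_iff)
    also have "\<dots> \<le> (1 - a/2) * measure \<nu> (H m)"
    proof -
      have "c * measure \<nu> (H m) \<le> a/2 * measure \<nu> (H m)"
        using c unfolding a_def[symmetric] by (intro mult_right_mono) auto
      then show ?thesis by (simp add: algebra_simps)
    qed
    finally show ?thesis .
  qed
  have a1: "a \<le> 1" unfolding a_def by simp
  have bnd: "measure \<nu> (H m) \<le> (1 - a/2) ^ m" for m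
  proof (induction m)
    case 0 then show ?case by (simp add: H0)
  next
    case (Suc m)
    have "measure \<nu> (H (Suc m)) \<le> (1 - a/2) * measure \<nu> (H m)" by (rule step)
    also have "\<dots> \<le> (1 - a/2) * (1 - a/2) ^ m"
      using Suc a1 by (intro mult_left_mono) auto
    finally show ?case by simp
  qed
  have mem: "\<And>x. x \<in> space \<nu> \<Longrightarrow> (\<forall>i<m. (f^^i) x \<notin> ball z \<rho>) \<Longrightarrow> x \<in> H m" for m
  proof (induction m)
    case 0 then show ?case by (simp add: H0)
  next
    case (Suc m)
    have fx: "f x \<in> space \<nu>" using measurable_space[OF fm] Suc.prems by auto
    have "\<forall>i<m. (f^^i) (f x) \<notin> ball z \<rho>"
    proof (intro allI impI)
      fix i assume "i < m"
      then have "(f^^Suc i) x \<notin> ball z \<rho>" using Suc.prems(2) by blast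
      then show "(f^^i) (f x) \<notin> ball z \<rho>" by (simp add: funpow_swap1)
    qed
    then have "f x \<in> H m" using Suc.IH fx by blast
    moreover have "x \<notin> ball z \<rho>" using Suc.prems(2)[rule_format, of 0] by simp
    ultimately show ?case using Suc.prems(1) by (simp add: HS)
  qed
  show ?thesis
  proof (intro bexI conjI ballI impI)
    show "f -` H m \<inter> space \<nu> \<in> sets \<nu>" using fm Hs by (simp add: measurable_sets)
    show "measure \<nu> (f -` H m \<inter> space \<nu>) \<le> (1 - measure \<nu> (ball z \<rho> \<inter> space \<nu>) / 2) ^ m"
      using finv Hs bnd unfolding a_def by simp
    fix x assume x: "x \<in> space \<nu>" "\<forall>i<m. (f ^^ Suc i) x \<notin> ball z \<rho>"
    have fx: "f x \<in> space \<nu>" using measurable_space[OF fm] x by auto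
    have "\<forall>i<m. (f^^i) (f x) \<notin> ball z \<rho>"
    proof (intro allI impI)
      fix i assume "i < m"
      then have "(f^^Suc i) x \<notin> ball z \<rho>" using x(2) by blast
      then show "(f^^i) (f x) \<notin> ball z \<rho>" by (simp add: funpow_swap1)
    qed
    then show "x \<in> f -` H m \<inter> space \<nu>" using mem fx x by blast
  qed
qed

lemma hit_bound:
  assumes "n \<ge> 1" "(T^^n) x \<in> ball y r"
  shows "hit_time T r x y \<noteq> \<infinity> \<and> 1 \<le> real_of_ereal (hit_time T r x y) \<and>
         real_of_ereal (hit_time T r x y) \<le> real n"
proof -
  have ex: "\<exists>n::nat. n \<ge> 1 \<and> (T ^^ n) x \<in> ball y r" using assms by blast
  let ?L = "LEAST n::nat. n \<ge> 1 \<and> (T ^^ n) x \<in> ball y r"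
  have "?L \<le> n" using assms by (intro Least_le) simp
  moreover have "?L \<ge> 1" using LeastI_ex[OF ex] by simp
  ultimately show ?thesis using ex unfolding hit_time_def by simp
qed

lemma asym_ln:
  fixes D E :: real assumes "E > 0"
  shows "eventually (\<lambda>k::nat. D + 2 * ln (real k) \<le> E * real k) sequentially"
proof -
  have "((\<lambda>k::nat. (D + 2 * ln (real k)) / real k) \<longlongrightarrow> 0) sequentially"
    by real_asymp
  then have "eventually (\<lambda>k::nat. (D + 2 * ln (real k)) / real k < E) sequentially"
    using assms by (rule order_tendstoD)
  moreover have "eventually (\<lambda>k::nat. k \<ge> 1) sequentially" by (rule eventually_ge_at_top)
  ultimately show ?thesis
  proof eventually_elim
    case (elim k)
    then have "real k > 0" by simp
    with elim show ?case by (simp add: divide_less_eq)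
  qed
qed

lemma exp_bound:
  fixes a t :: real and k m :: nat
  assumes "0 \<le> a" "a \<le> 1" "a \<ge> 2 powr (- (real k * t))"
    and "real m \<ge> 6 * real k * 2 powr (real k * t)"
  shows "(1 - a/2) ^ m \<le> (1/8) ^ k"
proof -
  have "(1 - a/2) ^ m \<le> exp (- a/2) ^ m"
    using assms(1,2) exp_ge_add_one_self[of "-a/2"] by (intro power_mono) auto
  also have "\<dots> = exp (- a/2 * real m)" by (simp add: exp_of_nat_mult[symmetric] mult.commute)
  also have "\<dots> \<le> exp (- 3 * real k)"
  proof -
    have "a * real m \<ge> 2 powr (- (real k * t)) * (6 * real k * 2 powr (real k * t))"
      using assms by (intro mult_mono) auto
    also have "2 powr (- (real k * t)) * (6 * real k * 2 powr (real k * t)) = 6 * real k"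
      by (simp add: powr_minus field_simps)
    finally show ?thesis by simp
  qed
  also have "\<dots> = exp (-3) ^ k" by (simp add: exp_of_nat_mult[symmetric] mult.commute)
  also have "\<dots> \<le> (1/8) ^ k"
  proof (intro power_mono)
    have "exp (1::real) \<ge> 2" using exp_ge_add_one_self[of 1] by simp
    then have "exp (1::real) ^ 3 \<ge> 2 ^ 3" by (intro power_mono) auto
    then have "exp (3::real) \<ge> 8" by (simp add: exp_of_nat_mult[symmetric])
    then show "exp (-3::real) \<le> 1/8" by (simp add: exp_minus field_simps)
  qed simp
  finally show ?thesis .
qed

lemma beta_bound:
  fixes C \<beta> t :: real and k :: nat
  assumes "C > 0" "0 < \<beta>" "\<beta> < 1"
    and g: "g = nat \<lceil>(\<bar>ln (2*C)\<bar> + real k * t * ln 2) / (- ln \<beta>)\<rceil> + 1"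
  shows "C * \<beta> ^ g \<le> 2 powr (- (real k * t)) / 2"
proof -
  define L where "L = - ln \<beta>"
  have L: "L > 0" using assms unfolding L_def by simp
  define g' where "g' = nat \<lceil>(\<bar>ln (2*C)\<bar> + real k * t * ln 2) / L\<rceil>"
  have "real g' \<ge> (\<bar>ln (2*C)\<bar> + real k * t * ln 2) / L" unfolding g'_def by linarith
  then have "real g' * L \<ge> \<bar>ln (2*C)\<bar> + real k * t * ln 2" using L by (simp add: divide_le_eq)
  then have h: "real g' * ln \<beta> \<le> - ln (2*C) - real k * t * ln 2" unfolding L_def by linarith
  have "g = g' + 1" by (simp only: g g'_def L_def)
  then have gg: "g' \<le> g" by simp
  have "\<beta> ^ g \<le> \<beta> ^ g'" using assms gg by (intro power_decreasing) auto
  also have "\<beta> ^ g' = exp (real g' * ln \<beta>)" using assms(2) by (simp add: exp_of_nat_mult)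
  also have "\<dots> \<le> exp (- ln (2*C) - real k * t * ln 2)" using h by simp
  also have "\<dots> = 2 powr (- (real k * t)) / (2 * C)"
    using assms by (simp add: exp_diff powr_def exp_minus ln_mult field_simps exp_add)
  finally have "\<beta> ^ g \<le> 2 powr (- (real k * t)) / (2 * C)" .
  then have "C * \<beta> ^ g \<le> C * (2 powr (- (real k * t)) / (2 * C))"
    using assms(1) by (intro mult_left_mono) auto
  also have "C * (2 powr (- (real k * t)) / (2 * C)) = 2 powr (- (real k * t)) / 2"
    using assms(1) by (simp add: field_simps)
  finally show ?thesis .
qed

lemma nat_ceil_le: "(x::real) \<ge> 0 \<Longrightarrow> real (nat \<lceil>x\<rceil>) \<le> x + 1 \<and> x \<le> real (nat \<lceil>x\<rceil>)"
proof -
  assume x: "x \<ge> 0"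
  then have "\<lceil>x\<rceil> \<ge> 0" by simp
  then have "real (nat \<lceil>x\<rceil>) = real_of_int \<lceil>x\<rceil>" by simp
  then show ?thesis using of_int_ceiling_le_add_one[of x] le_of_int_ceiling[of x] by simp
qed

lemma asym_gm:
  fixes C \<beta> t q :: real
  assumes "C > 0" "0 < \<beta>" "\<beta> < 1" "t \<ge> 0" "t < q"
  shows "eventually (\<lambda>k::nat. 3 \<le> k \<and>
     ln (real ((nat \<lceil>(\<bar>ln (2*C)\<bar> + real k * t * ln 2) / (- ln \<beta>)\<rceil> + 1) *
               nat \<lceil>6 * real k * 2 powr (real k * t)\<rceil>))
       \<le> q * (real k * ln 2 - ln 6)) sequentially"
proof -
  define L where "L = - ln \<beta>"
  have L: "L > 0" using assms unfolding L_def by simp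
  define A where "A = \<bar>ln (2*C)\<bar> / L + 2"
  define B where "B = t * ln 2 / L"
  have A: "A \<ge> 2" unfolding A_def using L by simp
  have B: "B \<ge> 0" unfolding B_def using L assms by simp
  have ev: "eventually (\<lambda>k::nat. ln (A+B) + ln 7 + q * ln 6 + 2 * ln (real k) \<le> ((q - t) * ln 2) * real k) sequentially"
    using assms by (intro asym_ln) simp
  moreover have "eventually (\<lambda>k::nat. k \<ge> 3) sequentially" by (rule eventually_ge_at_top)
  ultimately show ?thesis
  proof eventually_elim
    case (elim k)
    define g where "g = nat \<lceil>(\<bar>ln (2*C)\<bar> + real k * t * ln 2) / (- ln \<beta>)\<rceil> + 1"
    define m where "m = nat \<lceil>6 * real k * 2 powr (real k * t)\<rceil>"
    have k1: "real k \<ge> 1" using elim by simp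
    have x0: "(\<bar>ln (2*C)\<bar> + real k * t * ln 2) / L \<ge> 0" using L assms by simp
    have "real g \<le> (\<bar>ln (2*C)\<bar> + real k * t * ln 2) / L + 2"
      unfolding g_def L_def[symmetric] using x0 by linarith
    also have "\<dots> = A + B * real k" unfolding A_def B_def by (simp add: add_divide_distrib)
    also have "\<dots> \<le> (A + B) * real k" using mult_left_mono[OF k1, of A] A by (simp add: algebra_simps)
    finally have g: "real g \<le> (A + B) * real k" .
    have g1: "real g \<ge> 1" unfolding g_def by simp
    have p1: "2 powr (real k * t) \<ge> 1" using assms by (intro ge_one_powr_ge_zero) auto
    have "real m \<le> 6 * real k * 2 powr (real k * t) + 1" unfolding m_def using k1
      by (intro conjunct1[OF nat_ceil_le]) simp
    also have "\<dots> \<le> 7 * real k * 2 powr (real k * t)" using k1 p1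
    proof -
      have "real k * 2 powr (real k * t) \<ge> 1" using k1 p1 by (rule mult_ge1_I)
      then show ?thesis by simp
    qed
    finally have m: "real m \<le> 7 * real k * 2 powr (real k * t)" .
    have "6 * real k * 2 powr (real k * t) \<ge> 1" using k1 p1
    proof -
      have "6 * real k \<ge> 1" using k1 by simp
      then show ?thesis using p1 by (rule mult_ge1_I)
    qed
    then have m1: "real m \<ge> 1" unfolding m_def using nat_ceil_le[of "6 * real k * 2 powr (real k * t)"] by linarith
    have "ln (real (g * m)) = ln (real g) + ln (real m)" using g1 m1 by (simp add: ln_mult)
    also have "\<dots> \<le> ln ((A + B) * real k) + ln (7 * real k * 2 powr (real k * t))"
      using g m g1 m1 by (intro add_mono) auto
    also have "\<dots> = ln (A+B) + ln 7 + 2 * ln (real k) + real k * t * ln 2"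
    proof -
      have "ln ((A + B) * real k) = ln (A+B) + ln (real k)" using A B k1 by (simp add: ln_mult)
      moreover have "ln (7 * real k * 2 powr (real k * t)) = ln 7 + ln (real k) + ln (2 powr (real k * t))"
        using k1 by (simp add: ln_mult)
      moreover have "ln (2 powr (real k * t)) = real k * t * ln 2" by (simp add: ln_powr)
      ultimately show ?thesis by simp
    qed
    also have "\<dots> \<le> q * (real k * ln 2 - ln 6)" using elim(1) by (simp add: algebra_simps)
    finally have fin: "ln (real (g * m)) \<le> q * (real k * ln 2 - ln 6)" .
    show ?case using fin elim(2) unfolding g_def m_def by blast
  qed
qed

lemma main_t:
  fixes T :: "real \<Rightarrow> real" and \<nu> :: "real measure" and C \<beta> t q :: real
  assumes P: "prob_space \<nu>"
    and sp: "space \<nu> = {0..1}"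
    and sets: "sets \<nu> = sets (restrict_space borel {0..1::real})"
    and inv: "invariant_measure T \<nu>"
    and Cb: "C > 0" "0 < \<beta>" "\<beta> < 1"
    and mixC: "\<forall>y\<in>space \<nu>. \<forall>r>0. \<forall>B\<in>sets \<nu>. \<forall>n::nat. n \<ge> 1 \<longrightarrow>
          \<bar>measure \<nu> (ball y r \<inter> (T ^^ n) -` B \<inter> space \<nu>)
            - measure \<nu> (ball y r \<inter> space \<nu>) * measure \<nu> B\<bar>
          \<le> C * \<beta> ^ n * measure \<nu> B"
    and t: "t \<ge> 0" "t < q"
  shows "AE x in \<nu>. \<forall>y\<in>{0..1}. upper_local_dim \<nu> y < ereal t \<longrightarrow> upper_hit_exp T x y \<le> ereal q"
proof -
  interpret prob_space \<nu> by (rule P)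
  have Tm: "T \<in> measurable \<nu> \<nu>" and Tinv: "\<forall>B\<in>sets \<nu>. measure \<nu> (T -` B \<inter> space \<nu>) = measure \<nu> B"
    using inv unfolding invariant_measure_def by auto
  have ballm: "ball z r \<inter> space \<nu> \<in> sets \<nu>" for z r
  proof -
    have "{0..1} \<inter> ball z r \<in> sets (restrict_space borel {0..1::real})"
      unfolding sets_restrict_space by (rule imageI) simp
    then show ?thesis using sets sp by (simp add: Int_commute)
  qed
  define \<delta> :: "nat \<Rightarrow> real" where "\<delta> k = (1/2)^k" for k
  define gk where "gk k = nat \<lceil>(\<bar>ln (2*C)\<bar> + real k * t * ln 2) / (- ln \<beta>)\<rceil> + 1" for k :: nat
  define mk where "mk k = nat \<lceil>6 * real k * 2 powr (real k * t)\<rceil>" for k :: nat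
  define zz where "zz k j = real j / 2^k" for k j :: nat
  define aa where "aa k j = measure \<nu> (ball (zz k j) (2 * \<delta> k) \<inter> space \<nu>)" for k j
  define good where "good k j \<longleftrightarrow> j \<le> 2^k \<and> aa k j \<ge> 2 powr (- (real k * t))" for k j :: nat
  have dpos: "\<delta> k > 0" for k unfolding \<delta>_def by simp
  have lnd: "ln (\<delta> k) = - (real k * ln 2)" for k
  proof -
    have l2: "ln (1/2::real) = - ln 2" using ln_div[of 1 2] by simp
    show ?thesis unfolding \<delta>_def using l2 by (simp add: ln_realpow)
  qed
  have dpow: "\<delta> k powr t = 2 powr (- (real k * t))" for k
  proof -
    have l2: "ln (1/2::real) = - ln 2" using ln_div[of 1 2] by simp
    have "ln ((1/2::real)^k) = - (real k * ln 2)" using l2 by (simp add: ln_realpow)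
    then show ?thesis unfolding \<delta>_def powr_def by (simp add: algebra_simps)
  qed
  have ex: "\<exists>S. S \<in> sets \<nu> \<and> (good k j \<longrightarrow> measure \<nu> S \<le> (1/8)^k \<and>
      (\<forall>x\<in>space \<nu>. (\<forall>i<mk k. ((T^^gk k)^^Suc i) x \<notin> ball (zz k j) (2 * \<delta> k)) \<longrightarrow> x \<in> S))" for k j
  proof (cases "good k j")
    case False then show ?thesis by blast
  next
    case True
    have zsp: "zz k j \<in> space \<nu>" using True unfolding good_def zz_def sp by (simp add: divide_le_eq)
    have c: "C * \<beta> ^ gk k \<le> aa k j / 2"
      using beta_bound[OF Cb, of "gk k" k t] True unfolding good_def gk_def by simp
    have mix: "\<forall>B\<in>sets \<nu>. \<bar>measure \<nu> (ball (zz k j) (2 * \<delta> k) \<inter> (T^^gk k) -` B \<inter> space \<nu>)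
            - measure \<nu> (ball (zz k j) (2 * \<delta> k) \<inter> space \<nu>) * measure \<nu> B\<bar> \<le> (C * \<beta> ^ gk k) * measure \<nu> B"
    proof
      fix B assume B: "B \<in> sets \<nu>"
      have gk1: "gk k \<ge> 1" unfolding gk_def by simp
      have "0 < 2 * \<delta> k" using dpos[of k] by simp
      then show "\<bar>measure \<nu> (ball (zz k j) (2 * \<delta> k) \<inter> (T^^gk k) -` B \<inter> space \<nu>)
            - measure \<nu> (ball (zz k j) (2 * \<delta> k) \<inter> space \<nu>) * measure \<nu> B\<bar> \<le> (C * \<beta> ^ gk k) * measure \<nu> B"
        using mixC zsp gk1 B by blast
    qed
    obtain S where S: "S \<in> sets \<nu>" "measure \<nu> S \<le> (1 - aa k j / 2) ^ mk k"
      "\<forall>x\<in>space \<nu>. (\<forall>i<mk k. ((T^^gk k)^^Suc i) x \<notin> ball (zz k j) (2 * \<delta> k)) \<longrightarrow> x \<in> S"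
    proof -
      have finv: "\<forall>B\<in>sets \<nu>. measure \<nu> ((T^^gk k) -` B \<inter> space \<nu>) = measure \<nu> B"
        using inv_iter[OF Tm Tinv] by blast
      have c': "C * \<beta> ^ gk k \<le> measure \<nu> (ball (zz k j) (2 * \<delta> k) \<inter> space \<nu>) / 2"
        using c unfolding aa_def .
      show ?thesis using miss_bound_f[OF P measurable_compose_n[OF Tm] finv ballm mix c', of "mk k"] that
        unfolding aa_def by blast
    qed
    have "(1 - aa k j / 2) ^ mk k \<le> (1/8)^k"
    proof (rule exp_bound)
      show "0 \<le> aa k j" "aa k j \<le> 1" unfolding aa_def by auto
      show "2 powr (- (real k * t)) \<le> aa k j" using True unfolding good_def by simp
      show "6 * real k * 2 powr (real k * t) \<le> real (mk k)"
        unfolding mk_def using nat_ceil_le[of "6 * real k * 2 powr (real k * t)"] by simp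
    qed
    then show ?thesis using S True by (intro exI[of _ S]) auto
  qed
  obtain S where S: "\<And>k j. S k j \<in> sets \<nu> \<and> (good k j \<longrightarrow> measure \<nu> (S k j) \<le> (1/8)^k \<and>
      (\<forall>x\<in>space \<nu>. (\<forall>i<mk k. ((T^^gk k)^^Suc i) x \<notin> ball (zz k j) (2 * \<delta> k)) \<longrightarrow> x \<in> S k j))"
  proof -
    from ex have "\<forall>k. \<exists>Sk. \<forall>j. Sk j \<in> sets \<nu> \<and> (good k j \<longrightarrow> measure \<nu> (Sk j) \<le> (1/8)^k \<and>
      (\<forall>x\<in>space \<nu>. (\<forall>i<mk k. ((T^^gk k)^^Suc i) x \<notin> ball (zz k j) (2 * \<delta> k)) \<longrightarrow> x \<in> Sk j))"
      by (intro allI choice) blast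
    then have "\<exists>S. \<forall>k j. S k j \<in> sets \<nu> \<and> (good k j \<longrightarrow> measure \<nu> (S k j) \<le> (1/8)^k \<and>
      (\<forall>x\<in>space \<nu>. (\<forall>i<mk k. ((T^^gk k)^^Suc i) x \<notin> ball (zz k j) (2 * \<delta> k)) \<longrightarrow> x \<in> S k j))"
      by (rule choice)
    then show ?thesis using that by blast
  qed
  define E where "E k = (\<Union>j\<in>{j. j \<le> 2^k \<and> good k j}. S k j)" for k
  have fin: "finite {j. j \<le> 2^k \<and> good k j}" for k :: nat by simp
  have Em: "E k \<in> sets \<nu>" for k unfolding E_def using S fin by auto
  have Emeas: "measure \<nu> (E k) \<le> 2 * (1/4)^k" for k
  proof -
    have "measure \<nu> (E k) \<le> (\<Sum>j\<in>{j. j \<le> 2^k \<and> good k j}. measure \<nu> (S k j))"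
      unfolding E_def using S fin by (intro measure_UNION_le) auto
    also have "\<dots> \<le> real (card {j. j \<le> 2^k \<and> good k j}) * (1/8)^k"
      using S by (intro sum_bounded_above) auto
    also have "\<dots> \<le> real (2^k + 1) * (1/8)^k"
    proof -
      have "card {j. j \<le> 2^k \<and> good k j} \<le> card {..(2::nat)^k}" by (intro card_mono) auto
      then have "card {j. j \<le> 2^k \<and> good k j} \<le> 2^k + 1" by simp
      then have "real (card {j. j \<le> 2^k \<and> good k j}) \<le> real (2^k + 1)" by (rule of_nat_mono)
      then show ?thesis by (rule mult_right_mono) simp
    qed
    also have "\<dots> \<le> (2 * 2^k) * (1/8::real)^k" by (intro mult_right_mono) auto
    also have "\<dots> = 2 * (1/4)^k" by (simp add: power_mult_distrib[symmetric])
    finally show ?thesis .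
  qed
  have summ: "summable (\<lambda>k. measure \<nu> (E k))"
    by (rule summable_comparison_test'[where g="\<lambda>k. 2 * (1/4::real)^k" and N=0])
       (auto intro!: summable_mult summable_geometric simp: Emeas)
  have BC: "AE x in \<nu>. eventually (\<lambda>k. x \<in> space \<nu> - E k) sequentially"
    by (rule borel_cantelli_AE1[OF Em _ summ]) (simp add: less_top[symmetric])
  have asym: "eventually (\<lambda>k. 3 \<le> k \<and> ln (real (gk k * mk k)) \<le> q * (real k * ln 2 - ln 6)) sequentially"
    using asym_gm[OF Cb t] unfolding gk_def mk_def .
  show ?thesis using BC
  proof eventually_elim
    case (elim x)
    show ?case
    proof (intro ballI impI)
      fix y assume y: "y \<in> {0..1}" and dy: "upper_local_dim \<nu> y < ereal t"
      have ev0: "eventually (\<lambda>r. (if measure \<nu> (ball y r \<inter> space \<nu>) = 0 then \<infinity>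
             else ereal (ln (measure \<nu> (ball y r \<inter> space \<nu>)) / ln r)) < ereal t) (at_right 0)"
        using Limsup_lessD[OF dy[unfolded upper_local_dim_def]] .
      have ev1: "eventually (\<lambda>r::real. 0 < r \<and> r < 1) (at_right 0)"
        unfolding eventually_at_right_field by (intro exI[of _ 1]) auto
      have evr: "eventually (\<lambda>r. measure \<nu> (ball y r \<inter> space \<nu>) > r powr t) (at_right 0)"
        using ev0 ev1
      proof eventually_elim
        case (elim r)
        define \<mu> where "\<mu> = measure \<nu> (ball y r \<inter> space \<nu>)"
        have \<mu>0: "\<mu> \<noteq> 0" using elim(1) unfolding \<mu>_def by (cases "measure \<nu> (ball y r \<inter> space \<nu>) = 0") auto
        then have \<mu>p: "\<mu> > 0" unfolding \<mu>_def using measure_nonneg[of \<nu> "ball y r \<inter> space \<nu>"] by linarith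
        have "ln \<mu> / ln r < t" using elim(1) \<mu>0 unfolding \<mu>_def by simp
        moreover have "ln r < 0" using elim(2) by simp
        ultimately have "t * ln r < ln \<mu>" by (simp add: divide_less_eq)
        then have "exp (t * ln r) < \<mu>" using \<mu>p by (metis exp_less_cancel_iff exp_ln)
        then show ?case using elim(2) unfolding \<mu>_def by (simp add: powr_def mult.commute)
      qed
      have fl: "filterlim \<delta> (at_right 0) sequentially"
      proof (rule tendsto_imp_filterlim_at_right)
        show "\<delta> \<longlonglongrightarrow> 0" unfolding \<delta>_def by (rule LIMSEQ_realpow_zero) auto
        show "eventually (\<lambda>k. \<delta> k > 0) sequentially" using dpos by simp
      qed
      have evk: "eventually (\<lambda>k. measure \<nu> (ball y (\<delta> k) \<inter> space \<nu>) > \<delta> k powr t) sequentially"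
        using eventually_compose_filterlim[OF evr fl] .
      have "eventually (\<lambda>k. measure \<nu> (ball y (\<delta> k) \<inter> space \<nu>) > \<delta> k powr t \<and> x \<in> space \<nu> - E k \<and>
          3 \<le> k \<and> ln (real (gk k * mk k)) \<le> q * (real k * ln 2 - ln 6)) sequentially"
        using evk elim asym by eventually_elim auto
      then obtain K where K: "\<And>k. k \<ge> K \<Longrightarrow> measure \<nu> (ball y (\<delta> k) \<inter> space \<nu>) > \<delta> k powr t \<and> x \<in> space \<nu> - E k \<and>
          3 \<le> k \<and> ln (real (gk k * mk k)) \<le> q * (real k * ln 2 - ln 6)"
        unfolding eventually_sequentially by blast
      have dmono: "\<delta> b \<le> \<delta> a" if "a \<le> b" for a b
        unfolding \<delta>_def using that by (intro power_decreasing) auto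
      have dSuc: "\<delta> (Suc m) = \<delta> m / 2" for m unfolding \<delta>_def by simp
      show "upper_hit_exp T x y \<le> ereal q"
        unfolding upper_hit_exp_def
      proof (rule Limsup_bounded)
        show "eventually (\<lambda>r. (if hit_time T r x y = \<infinity> then \<infinity>
             else ereal (ln (real_of_ereal (hit_time T r x y)) / (- ln r))) \<le> ereal q) (at_right 0)"
          unfolding eventually_at_right_field
        proof (intro exI[of _ "3 * \<delta> K"] conjI allI impI)
          show "0 < 3 * \<delta> K" using dpos[of K] by simp
          fix r :: real assume r0: "0 < r" and rK: "r < 3 * \<delta> K"
          have exk: "\<exists>k. 3 * \<delta> k \<le> r"
          proof -
            obtain n where "(1/2::real)^n < r/3" using real_arch_pow_inv[of "r/3" "1/2"] r0 by auto
            then show ?thesis unfolding \<delta>_def by (intro exI[of _ n]) simp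
          qed
          define k where "k = (LEAST k. 3 * \<delta> k \<le> r)"
          have k1: "3 * \<delta> k \<le> r" unfolding k_def by (rule LeastI_ex[OF exk])
          have kK: "K < k"
          proof (rule ccontr)
            assume "\<not> K < k"
            then have "\<delta> K \<le> \<delta> k" using dmono by simp
            then show False using k1 rK by simp
          qed
          then obtain k' where k': "k = Suc k'" by (cases k) auto
          have "\<not> 3 * \<delta> k' \<le> r" using not_less_Least[of k' "\<lambda>k. 3 * \<delta> k \<le> r"] k' unfolding k_def by simp
          then have k2: "r < 6 * \<delta> k" using dSuc[of k'] k' by simp
          have Kk: "measure \<nu> (ball y (\<delta> k) \<inter> space \<nu>) > \<delta> k powr t" "x \<in> space \<nu>" "x \<notin> E k"
            "3 \<le> k" "ln (real (gk k * mk k)) \<le> q * (real k * ln 2 - ln 6)"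
            using K[of k] kK by auto
          define j where "j = nat \<lfloor>y * 2^k\<rfloor>"
          have fl0: "\<lfloor>y * 2^k\<rfloor> \<ge> 0" using y by simp
          have rj: "real j = real_of_int \<lfloor>y * 2^k\<rfloor>" unfolding j_def using fl0 by simp
          have "real_of_int \<lfloor>y * 2^k\<rfloor> \<le> y * 2^k" by (rule of_int_floor_le)
          also have "y * 2^k \<le> 2^k" using y by simp
          finally have "real j \<le> 2^k" using rj by simp
          then have jle: "j \<le> 2^k" by (metis of_nat_le_iff of_nat_numeral of_nat_power)
          have p2: "(2::real)^k > 0" by simp
          have dk: "\<delta> k = 1 / 2^k" unfolding \<delta>_def by (simp add: power_one_over)
          have z1: "zz k j \<le> y" unfolding zz_def using rj of_int_floor_le[of "y * 2^k"] p2
            by (simp add: divide_le_eq)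
          have z2: "y < zz k j + \<delta> k" unfolding zz_def dk using rj real_of_int_floor_add_one_gt[of "y * 2^k"] p2
            by (simp add: field_simps)
          have yz: "dist y (zz k j) < \<delta> k" using z1 z2 by (simp add: dist_real_def)
          have sub1: "ball y (\<delta> k) \<inter> space \<nu> \<subseteq> ball (zz k j) (2 * \<delta> k) \<inter> space \<nu>"
          proof
            fix w assume "w \<in> ball y (\<delta> k) \<inter> space \<nu>"
            then have "dist y w < \<delta> k" "w \<in> space \<nu>" by auto
            then show "w \<in> ball (zz k j) (2 * \<delta> k) \<inter> space \<nu>"
              using yz dist_triangle[of "zz k j" w y] by (auto simp: dist_commute)
          qed
          have "measure \<nu> (ball y (\<delta> k) \<inter> space \<nu>) \<le> aa k j"
            unfolding aa_def using sub1 ballm by (rule finite_measure_mono)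
          then have gd: "good k j" unfolding good_def using jle Kk(1) dpow[of k] by simp
          have "x \<notin> S k j" using Kk(3) jle gd unfolding E_def by blast
          then obtain i where i: "i < mk k" "((T^^gk k)^^Suc i) x \<in> ball (zz k j) (2 * \<delta> k)"
            using S[of k j] gd Kk(2) by blast
          define n where "n = gk k * Suc i"
          have gk1: "gk k \<ge> 1" unfolding gk_def by simp
          have n1: "n \<ge> 1" unfolding n_def using gk1 by simp
          have nle: "n \<le> gk k * mk k" unfolding n_def using i(1) by (intro mult_le_mono2) simp
          have "(T^^n) x \<in> ball (zz k j) (2 * \<delta> k)" using i(2) unfolding n_def by (simp add: funpow_mult)
          then have "(T^^n) x \<in> ball y r"
            using yz k1 dist_triangle[of y "(T^^n) x" "zz k j"] by (auto simp: dist_commute)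
          from hit_bound[OF n1 this]
          have hb: "hit_time T r x y \<noteq> \<infinity>" "1 \<le> real_of_ereal (hit_time T r x y)"
            "real_of_ereal (hit_time T r x y) \<le> real n" by auto
          define \<tau> where "\<tau> = real_of_ereal (hit_time T r x y)"
          define D where "D = real k * ln 2 - ln 6"
          have l8: "ln (8::real) = 3 * ln 2" using ln_realpow[of 2 3] by simp
          have "ln 6 < ln (8::real)" by simp
          moreover have "3 * ln 2 \<le> real k * ln (2::real)" using Kk(4) by (intro mult_right_mono) auto
          ultimately have Dp: "D > 0" unfolding D_def using l8 by linarith
          have "ln r < ln (6 * \<delta> k)" using k2 r0 by simp
          also have "ln (6 * \<delta> k) = ln 6 - real k * ln 2" using dpos[of k] lnd[of k] by (simp add: ln_mult)
          finally have lr: "D \<le> - ln r" unfolding D_def by simp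
          have lt0: "0 \<le> ln \<tau>" using hb unfolding \<tau>_def by simp
          have "ln \<tau> \<le> ln (real n)" using hb n1 unfolding \<tau>_def by simp
          also have "\<dots> \<le> ln (real (gk k * mk k))"
          proof -
            have "real n \<le> real (gk k * mk k)" using nle by (rule of_nat_mono)
            moreover have "real n > 0" using n1 by simp
            ultimately show ?thesis by (rule ln_mono)
          qed
          finally have lt: "ln \<tau> \<le> ln (real (gk k * mk k))" .
          have "ln \<tau> / (- ln r) \<le> ln \<tau> / D" using Dp lr lt0
          proof (intro divide_left_mono)
            have "0 < (- ln r) * D" using Dp lr by (intro mult_pos_pos) auto
            then show "0 < (- ln r) * D" .
          qed auto
          also have "\<dots> \<le> ln (real (gk k * mk k)) / D" using Dp lt by (intro divide_right_mono) auto
          also have "\<dots> \<le> q" using Dp Kk(5) unfolding D_def[symmetric] by (simp add: pos_divide_le_eq mult.commute)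
          finally have "ln \<tau> / (- ln r) \<le> q" .
          then show "(if hit_time T r x y = \<infinity> then \<infinity>
             else ereal (ln (real_of_ereal (hit_time T r x y)) / (- ln r))) \<le> ereal q"
            using hb(1) unfolding \<tau>_def by simp
        qed
      qed
    qed
  qed
qed

lemma dim_nonneg:
  assumes P: "prob_space \<nu>"
  shows "upper_local_dim \<nu> y \<ge> 0"
proof -
  interpret prob_space \<nu> by (rule P)
  let ?f = "\<lambda>r. if measure \<nu> (ball y r \<inter> space \<nu>) = 0 then \<infinity>
             else ereal (ln (measure \<nu> (ball y r \<inter> space \<nu>)) / ln r)"
  have ev: "eventually (\<lambda>r. 0 \<le> ?f r) (at_right (0::real))"
    unfolding eventually_at_right_field
  proof (intro exI[of _ 1] conjI allI impI)
    fix r :: real assume r: "0 < r" "r < 1"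
    show "0 \<le> ?f r"
    proof (cases "measure \<nu> (ball y r \<inter> space \<nu>) = 0")
      case False
      then have "measure \<nu> (ball y r \<inter> space \<nu>) > 0"
        using measure_nonneg[of \<nu> "ball y r \<inter> space \<nu>"] by linarith
      moreover have "measure \<nu> (ball y r \<inter> space \<nu>) \<le> 1" by simp
      ultimately have "ln (measure \<nu> (ball y r \<inter> space \<nu>)) \<le> 0" by simp
      moreover have "ln r < 0" using r by simp
      ultimately show ?thesis using False by (simp add: divide_nonpos_neg)
    qed simp
  qed simp
  have "0 \<le> Liminf (at_right (0::real)) ?f" by (rule Liminf_bounded[OF ev])
  also have "\<dots> \<le> Limsup (at_right 0) ?f" by (rule Liminf_le_Limsup) simp
  finally show ?thesis unfolding upper_local_dim_def .
qed

theorem lemma5p4: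
  fixes T :: "real \<Rightarrow> real" and \<nu> :: "real measure" and s :: real
  assumes "prob_space \<nu>"
    and "space \<nu> = {0..1}"
    and "sets \<nu> = sets (restrict_space borel {0..1::real})"
    and "invariant_measure T \<nu>"
    and "exp_mixing T \<nu>"
    and "s \<ge> 0"
  shows "AE x in \<nu>. \<forall>y\<in>{0..1}.
           upper_hit_exp T x y \<ge> ereal s \<longrightarrow> upper_local_dim \<nu> y \<ge> ereal s"
proof (cases "s = 0")
  case True
  then show ?thesis using dim_nonneg[OF assms(1)] by (intro AE_I2) (simp add: zero_ereal_def[symmetric])
next
  case False
  then have s: "s > 0" using assms(6) by simp
  obtain C \<beta> where Cb: "C > 0" "0 < \<beta>" "\<beta> < 1" and
    mixC: "\<forall>y\<in>space \<nu>. \<forall>r>0. \<forall>B\<in>sets \<nu>. \<forall>n::nat. n \<ge> 1 \<longrightarrow>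
          \<bar>measure \<nu> (ball y r \<inter> (T ^^ n) -` B \<inter> space \<nu>)
            - measure \<nu> (ball y r \<inter> space \<nu>) * measure \<nu> B\<bar>
          \<le> C * \<beta> ^ n * measure \<nu> B"
    using assms(5) unfolding exp_mixing_def by blast
  define tj where "tj j = s * (1 - 1 / (real j + 2))" for j :: nat
  define qj where "qj j = (tj j + s) / 2" for j
  have tq: "tj j \<ge> 0" "tj j < qj j" "qj j < s" for j
  proof -
    have a1: "s / (real j + 2) > 0" using s by simp
    have "s * 1 < s * (real j + 2)" using s by (intro mult_strict_left_mono) auto
    then have a2: "s / (real j + 2) < s" by (simp add: divide_less_eq)
    have e: "tj j = s - s / (real j + 2)" unfolding tj_def by (simp add: algebra_simps)
    show "tj j \<ge> 0" unfolding e using a2 by linarith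
    have g1: "\<And>x::real. 0 < x \<Longrightarrow> s - x < (s - x + s) / 2" by (simp add: field_simps)
    have g2: "\<And>x::real. 0 < x \<Longrightarrow> (s - x + s) / 2 < s" by (simp add: field_simps)
    show "tj j < qj j" unfolding qj_def e using g1[OF a1] .
    show "qj j < s" unfolding qj_def e using g2[OF a1] .
  qed
  have "AE x in \<nu>. \<forall>j. \<forall>y\<in>{0..1}. upper_local_dim \<nu> y < ereal (tj j) \<longrightarrow> upper_hit_exp T x y \<le> ereal (qj j)"
    unfolding AE_all_countable
    using main_t[OF assms(1-4) Cb mixC tq(1,2)] by blast
  then show ?thesis
  proof (rule AE_mp, intro AE_I2 impI ballI)
    fix x y assume H: "\<forall>j. \<forall>y\<in>{0..1}. upper_local_dim \<nu> y < ereal (tj j) \<longrightarrow> upper_hit_exp T x y \<le> ereal (qj j)"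
      and y: "y \<in> {0..1}" and R: "ereal s \<le> upper_hit_exp T x y"
    show "ereal s \<le> upper_local_dim \<nu> y"
    proof (rule ccontr)
      assume "\<not> ereal s \<le> upper_local_dim \<nu> y"
      then have ds: "upper_local_dim \<nu> y < ereal s" by simp
      have d0: "upper_local_dim \<nu> y \<ge> 0" by (rule dim_nonneg[OF assms(1)])
      obtain d where d: "upper_local_dim \<nu> y = ereal d" using ds d0 by (cases "upper_local_dim \<nu> y") auto
      have dlt: "d < s" using ds d by simp
      obtain n :: nat where n: "s / (s - d) < real n" using reals_Archimedean2 by blast
      have "s / (s - d) < real n + 2" using n by simp
      then have "s < (real n + 2) * (s - d)" using dlt by (simp add: divide_less_eq)
      then have "s / (real n + 2) < s - d" by (simp add: divide_less_eq mult.commute)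
      then have "d < tj n" unfolding tj_def by (simp add: algebra_simps)
      then have "upper_hit_exp T x y \<le> ereal (qj n)" using H y d by simp
      then have "ereal s \<le> ereal (qj n)" using R by (meson order_trans)
      then show False using tq(3)[of n] by simp
    qed
  qed
qed

end
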